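(* Let $\beta(s)=(x(s),0,z(s))$, $s\in I$, be a smooth curve in the $xz$-plane parametrized by arc length with $x(s)>0$, and let $\Sigma$ be the surface obtained by rotating $\beta$ about the $z$-axis, parametrized by $(s,\theta)\mapsto(x(s)\cos\theta,x(s)\sin\theta,z(s))$, with unit normal $N=(-z'(s)\cos\theta,-z'(s)\sin\theta,x'(s))$. Suppose that for all $s\in I$: (a) $-1\le x''(s)\Big(x(s)-\frac{x'(s)}{z'(s)}z(s)\Big)$ whenever $z'(s)\ne0$; (b) $-1\le z(s)z''(s)$ whenever $z'(s)=0$; (c) $-x(s)x'(s)^2\le z'(s)x'(s)z(s)$. Then at every point of $\Sigma$, $$|\Phi|^2\langle\vec x,N\rangle^2\le\tfrac12\big(2+H\langle\vec x,N\rangle\big)^2,$$ where $H$ and $\Phi$ are the (pointwise) mean curvature and traceless second fundamental form of $\Sigma$ with respect to $N$.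
   Context: Conventions: $\vec x$ is the position vector; shape operator $A$ with respect to $N$ defined by $\langle A(Y),Z\rangle=\langle\bar\nabla_YZ,N\rangle$; principal curvatures $k_1,k_2$ its eigenvalues; $H=k_1+k_2$ (unnormalized); $\Phi=\Pi-\frac H2 g_\Sigma$ with $\Pi(X,Y)=g_\Sigma(AX,Y)$, so $|\Phi|^2=|A|^2-H^2/2$. For this surface of revolution, $\langle\vec x,N\rangle=x'z-xz'$, the principal curvatures are $x'z''-x''z'$ (meridian direction) and $z'/x$ (parallel direction). *)

theory Defs
  imports "HOL-Analysis.Analysis"
begin

definition smooth_on :: "real set \<Rightarrow> (real \<Rightarrow> real) \<Rightarrow> bool" where
  "smooth_on S f \<longleftrightarrow> (\<forall>n. \<forall>s\<in>S. ((deriv ^^ n) f) differentiable (at s))"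

definition rev_surf :: "(real \<Rightarrow> real) \<Rightarrow> (real \<Rightarrow> real) \<Rightarrow> real \<Rightarrow> real \<Rightarrow> real \<times> real \<times> real" where
  "rev_surf x z s \<theta> = (x s * cos \<theta>, x s * sin \<theta>, z s)"

definition rev_normal :: "(real \<Rightarrow> real) \<Rightarrow> (real \<Rightarrow> real) \<Rightarrow> real \<Rightarrow> real \<Rightarrow> real \<times> real \<times> real" where
  "rev_normal x z s \<theta> = (- deriv z s * cos \<theta>, - deriv z s * sin \<theta>, deriv x s)"

text \<open>Principal curvatures (meridian and parallel direction) w.r.t. N, as given in the context.\<close>
definition k1 :: "(real \<Rightarrow> real) \<Rightarrow> (real \<Rightarrow> real) \<Rightarrow> real \<Rightarrow> real" where
  "k1 x z s = deriv x s * deriv (deriv z) s - deriv (deriv x) s * deriv z s"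

definition k2 :: "(real \<Rightarrow> real) \<Rightarrow> (real \<Rightarrow> real) \<Rightarrow> real \<Rightarrow> real" where
  "k2 x z s = deriv z s / x s"

text \<open>Unnormalised mean curvature H = k1 + k2, |A|^2 = k1^2 + k2^2, |Phi|^2 = |A|^2 - H^2/2.\<close>
definition mean_curv :: "(real \<Rightarrow> real) \<Rightarrow> (real \<Rightarrow> real) \<Rightarrow> real \<Rightarrow> real" where
  "mean_curv x z s = k1 x z s + k2 x z s"

definition normA_sq :: "(real \<Rightarrow> real) \<Rightarrow> (real \<Rightarrow> real) \<Rightarrow> real \<Rightarrow> real" where
  "normA_sq x z s = (k1 x z s)\<^sup>2 + (k2 x z s)\<^sup>2"

definition normPhi_sq :: "(real \<Rightarrow> real) \<Rightarrow> (real \<Rightarrow> real) \<Rightarrow> real \<Rightarrow> real" where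
  "normPhi_sq x z s = normA_sq x z s - (mean_curv x z s)\<^sup>2 / 2"

end

theory Submission
  imports Defs
begin

lemma alg_core:
  fixes k1 k2 p :: real
  assumes "0 \<le> 1 + k1 * p" "0 \<le> 1 + k2 * p"
  shows "(k1\<^sup>2 + k2\<^sup>2 - (k1 + k2)\<^sup>2 / 2) * p\<^sup>2 \<le> 1/2 * (2 + (k1 + k2) * p)\<^sup>2"
proof -
  have "1/2 * (2 + (k1 + k2) * p)\<^sup>2 - (k1\<^sup>2 + k2\<^sup>2 - (k1 + k2)\<^sup>2 / 2) * p\<^sup>2
        = 2 * ((1 + k1 * p) * (1 + k2 * p))"
    by (simp add: power2_eq_square algebra_simps)
  moreover have "0 \<le> (1 + k1 * p) * (1 + k2 * p)" using assms by simp
  ultimately show ?thesis by linarith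
qed

theorem lemma3p1:
  fixes x z :: "real \<Rightarrow> real" and I :: "real set"
  assumes I: "is_interval I" "open I"
    and smooth: "smooth_on I x" "smooth_on I z"
    and arclen: "\<forall>s\<in>I. (deriv x s)\<^sup>2 + (deriv z s)\<^sup>2 = 1"
    and xpos: "\<forall>s\<in>I. x s > 0"
    and a: "\<forall>s\<in>I. deriv z s \<noteq> 0 \<longrightarrow>
              -1 \<le> deriv (deriv x) s * (x s - deriv x s / deriv z s * z s)"
    and b: "\<forall>s\<in>I. deriv z s = 0 \<longrightarrow> -1 \<le> z s * deriv (deriv z) s"
    and c: "\<forall>s\<in>I. - x s * (deriv x s)\<^sup>2 \<le> deriv z s * deriv x s * z s"
  shows "\<forall>s\<in>I. \<forall>\<theta>.
     normPhi_sq x z s * (inner (rev_surf x z s \<theta>) (rev_normal x z s \<theta>))\<^sup>2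
       \<le> 1/2 * (2 + mean_curv x z s * inner (rev_surf x z s \<theta>) (rev_normal x z s \<theta>))\<^sup>2"
proof (intro ballI allI)
  fix s \<theta> assume s: "s \<in> I"
  define A where "A = deriv x s"
  define B where "B = deriv z s"
  define C where "C = deriv (deriv x) s"
  define D where "D = deriv (deriv z) s"
  define X where "X = x s"
  define Z where "Z = z s"
  define p where "p = Z * A - X * B"
  have ip: "inner (rev_surf x z s \<theta>) (rev_normal x z s \<theta>) = p"
  proof -
    have t0: "(cos \<theta> * cos \<theta> + sin \<theta> * sin \<theta>) * (x s * deriv z s) = x s * deriv z s"
      by (simp add: sin_cos_squared_add3)
    have t: "cos \<theta> * (cos \<theta> * (x s * deriv z s)) + sin \<theta> * (sin \<theta> * (x s * deriv z s)) = x s * deriv z s"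
      using t0 by (simp only: distrib_right mult.assoc)
    show ?thesis
      unfolding rev_surf_def rev_normal_def p_def A_def B_def X_def Z_def
      by (simp add: inner_Pair power2_eq_square algebra_simps) (use t in linarith)
  qed
  have dx: "(deriv x has_field_derivative C) (at s)"
  proof -
    have "((deriv ^^ 1) x) differentiable (at s)" using smooth(1) s unfolding smooth_on_def by blast
    then show ?thesis unfolding C_def by (simp add: DERIV_deriv_iff_real_differentiable)
  qed
  have dz: "(deriv z has_field_derivative D) (at s)"
  proof -
    have "((deriv ^^ 1) z) differentiable (at s)" using smooth(2) s unfolding smooth_on_def by blast
    then show ?thesis unfolding D_def by (simp add: DERIV_deriv_iff_real_differentiable)
  qed
  have "((\<lambda>t. (deriv x t)\<^sup>2 + (deriv z t)\<^sup>2) has_field_derivative (2 * A * C + 2 * B * D)) (at s)"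
    unfolding A_def B_def
    by (auto intro!: derivative_eq_intros dx dz)
  moreover have "((\<lambda>t. (deriv x t)\<^sup>2 + (deriv z t)\<^sup>2) has_field_derivative 0) (at s)"
    by (rule has_field_derivative_transform_within_open[OF DERIV_const I(2) s])
       (use arclen in auto)
  ultimately have orth: "A * C + B * D = 0"
    using DERIV_unique by fastforce
  have al: "A\<^sup>2 + B\<^sup>2 = 1" using arclen s unfolding A_def B_def by auto
  have Xp: "X > 0" using xpos s unfolding X_def by auto
  have k1e: "k1 x z s = A * D - C * B" unfolding k1_def A_def B_def C_def D_def ..
  have k2e: "k2 x z s = B / X" unfolding k2_def B_def X_def ..
  have h2: "0 \<le> 1 + k2 x z s * p"
  proof -
    have e1: "A*(A*X) + B*(B*X) = (A*A+B*B)*X" by (simp add: algebra_simps)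
    have e: "X = A*(A*X) + B*(B*X)" using e1 al by (simp add: power2_eq_square)
    have "1 + k2 x z s * p = (X * A\<^sup>2 + B * A * Z) / X"
      using Xp unfolding k2e p_def by (simp add: field_simps power2_eq_square) (use e in linarith)
    moreover have "0 \<le> X * A\<^sup>2 + B * A * Z"
      using c s unfolding A_def B_def X_def Z_def by auto
    ultimately show ?thesis using Xp by simp
  qed
  have h1: "0 \<le> 1 + k1 x z s * p"
  proof (cases "B = 0")
    case True
    then have "A\<^sup>2 = 1" using al by simp
    moreover have "A * C = 0" using orth True by simp
    ultimately have "C = 0" by auto
    then have "1 + k1 x z s * p = 1 + A\<^sup>2 * (Z * D)" unfolding k1e p_def using True
      by (simp add: power2_eq_square)
    moreover have "-1 \<le> Z * D" using b s True unfolding B_def Z_def D_def by auto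
    ultimately show ?thesis using \<open>A\<^sup>2 = 1\<close> by simp
  next
    case False
    have Dq: "D = - A * C / B" using orth False by (simp add: field_simps)
    have "k1 x z s = - C / B"
    proof -
      have "A * D - C * B = - C * (A\<^sup>2 + B\<^sup>2) / B"
        using False by (simp add: Dq field_simps power2_eq_square)
      then show ?thesis using al k1e by simp
    qed
    then have "1 + k1 x z s * p = 1 + (- C / B) * (Z * A - X * B)"
      unfolding p_def by simp
    also have "\<dots> = 1 + C * (X - A / B * Z)"
      using False by (simp add: field_simps)
    finally have "1 + k1 x z s * p = 1 + C * (X - A / B * Z)" .
    moreover have "-1 \<le> C * (X - A / B * Z)"
      using a s False unfolding A_def B_def C_def X_def Z_def by auto
    ultimately show ?thesis by simp
  qed
  show "normPhi_sq x z s * (inner (rev_surf x z s \<theta>) (rev_normal x z s \<theta>))\<^sup>2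
       \<le> 1/2 * (2 + mean_curv x z s * inner (rev_surf x z s \<theta>) (rev_normal x z s \<theta>))\<^sup>2"
    unfolding ip normPhi_sq_def normA_sq_def mean_curv_def
    using alg_core[OF h1 h2] .
qed

end
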